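(* Assume the setting described in the context. Suppose that Assumption (A1) and Assumption (A2) hold. Then for every compact interval $I\subset(0,\infty)$ and every $r>0$, \[\lim_{n\rightarrow\infty}\sup_{x\in B_F(\rho,r)}\sup_{t\in I}\left|\beta(n)q^n_{\lfloor\gamma(n)t\rfloor}(g_n(x))-q_t(x)\right|=0. \qquad (\ast)\] Conversely, suppose that $V(G^n)\subseteq F$ for every $n$, that Assumption (A1) holds, and that $(\ast)$ holds for every compact interval $I\subset(0,\infty)$ and every $r>0$. Then Assumption (A2) holds.
   Context: Let $(E,d_E)$ be a metric space and $F\subseteq E$ such that $F\cap\overline{B}_E(x,r)$ is compact for all $x\in E$, $r>0$; here $\overline{B}_E(x,r)$, $B_E(x,r)$ are the closed and open balls of $(E,d_E)$. Let $d_F:=d_E|_{F\times F}$ and let $B_F(x,r)$ be the open ball in $(F,d_F)$. Fix $\rho\in F$, a Radon measure $\nu$ of full support on $(F,d_F)$ (regarded also as a Borel measure on $E$ via $\nu(A):=\nu(A\cap F)$), and a function $(q_t(x))_{x\in F,t>0}$, jointly continuous in $(t,x)$, with $q_t\geq 0$ and $\int_F q_t\,d\nu=1$ for each $t>0$. For a locally finite connected graph $G$ with at least two vertices, vertex set $V(G)$, edge set $E(G)$ and distinguished vertex $\rho(G)$: $d_G$ is the shortest-path metric and $B_G(x,r)$ the open $d_G$-ball; $\mu^G:V(G)^2\to[0,\infty)$ is a symmetric weight with $\mu^G_{xy}>0$ iff $\{x,y\}\in E(G)$; $\mu^G_x:=\sum_y\mu^G_{xy}$; $\nu^G(A):=\sum_{x\in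 A}\mu^G_x$. The discrete time simple random walk $X^G=(X^G_m)_{m\ge0}$ is the Markov chain with transition probabilities $P_G(x,y)=\mu^G_{xy}/\mu^G_x$, with law $\mathbf{P}^G_x$ when started at $x$. Set $p^G_m(x,y):=\mathbf{P}^G_x(X^G_m=y)/\nu^G(\{y\})$, $q^G_m(x,y):=\frac12(p^G_m(x,y)+p^G_{m+1}(x,y))$ and $q^G_m(x):=q^G_m(\rho(G),x)$. Let $(G^n)_{n\ge1}$ be locally finite connected graphs with $\#V(G^n)\ge2$, $V(G^n)\subseteq E$, $\rho(G^n)=\rho$; write $\nu^n,X^n,q^n,\mathbf{P}^{G^n}$ for $\nu^{G^n},X^{G^n},q^{G^n}$, etc. Let $(\alpha(n)),(\beta(n)),(\gamma(n))$ be non-negative sequences diverging to $\infty$. For $x\in E$, $g_n(x)$ denotes a point of $V(G^n)$ minimising $d_E(x,y)$ over $y\in V(G^n)$ (such a point exists under (A1)). Assumption (A1): (a) there is $c_1>0$ with $d_{G^n}(x,y)\ge c_1\alpha(n)d_E(x,y)$ for all $x,y\in V(G^n)$, $n\ge1$; and there is a non-negative sequence $\tilde\alpha(n)=o(\alpha(n))$ such that for each $r>0$ there exist $c_2<\infty$ and $n_0$ with $d_{G^n}(x,y)\le c_2\alpha(n)d_E(x,y)+\tilde\alpha(n)$ for all $x,y\in V(G^n)\cap B_E(\rho,r)$, $n\ge n_0$. (b) For each $r>0$, $\lim_{n}\sup_{x\in B_F(\rho,r)}d_E(x,V(G^n))=0$. (c) For every $x\in F$, $r>0$, $\lim_n\beta(n)^{-1}\nu^n(B_E(x,r))=\nu(B_E(x,r))$.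 (d) For every compact interval $I\subset(0,\infty)$, $x\in F$, $r>0$, $\lim_n\mathbf{P}^{G^n}_\rho(X^n_{\lfloor\gamma(n)t\rfloor}\in B_E(x,r))=\int_{B_F(x,r)}q_t(y)\nu(dy)$ uniformly for $t\in I$. Assumption (A2): for every compact interval $I\subset(0,\infty)$ and $r>0$, \[\lim_{\delta\to0}\limsup_{n\to\infty}\sup_{\substack{x,y\in B_{G^n}(\rho,\alpha(n)r):\\ d_{G^n}(x,y)\le\alpha(n)\delta}}\sup_{t\in I}\beta(n)\left|q^n_{\lfloor\gamma(n)t\rfloor}(x)-q^n_{\lfloor\gamma(n)t\rfloor}(y)\right|=0.\] *)

theory Defs
  imports "HOL-Probability.Probability" "HOL-Library.Landau_Symbols"
begin

text \<open>A graph G is given by its vertex set V and its symmetric weight mu;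
  the edges are exactly the pairs with positive weight.\<close>

definition adj :: "('a \<Rightarrow> 'a \<Rightarrow> real) \<Rightarrow> 'a \<Rightarrow> 'a \<Rightarrow> bool" where
  "adj mu x y \<longleftrightarrow> 0 < mu x y"

definition wgraph :: "'a set \<Rightarrow> ('a \<Rightarrow> 'a \<Rightarrow> real) \<Rightarrow> bool" where
  "wgraph V mu \<longleftrightarrow>
     (\<forall>x y. mu x y = mu y x) \<and> (\<forall>x y. 0 \<le> mu x y) \<and>
     (\<forall>x y. 0 < mu x y \<longrightarrow> x \<in> V \<and> y \<in> V \<and> x \<noteq> y) \<and>
     (\<forall>x\<in>V. finite {y. 0 < mu x y}) \<and>
     (\<forall>x\<in>V. \<forall>y\<in>V. \<exists>k. (adj mu ^^ k) x y) \<and>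
     (\<exists>x\<in>V. \<exists>y\<in>V. x \<noteq> y)"

definition gdist :: "('a \<Rightarrow> 'a \<Rightarrow> real) \<Rightarrow> 'a \<Rightarrow> 'a \<Rightarrow> real" where
  "gdist mu x y = real (LEAST k. (adj mu ^^ k) x y)"

definition wdeg :: "('a \<Rightarrow> 'a \<Rightarrow> real) \<Rightarrow> 'a \<Rightarrow> real" where
  "wdeg mu x = (\<Sum>y\<in>{y. 0 < mu x y}. mu x y)"

definition gmeasure :: "('a \<Rightarrow> 'a \<Rightarrow> real) \<Rightarrow> 'a set \<Rightarrow> 'a set \<Rightarrow> ennreal" where
  "gmeasure mu V A = (\<integral>\<^sup>+ x. indicator (A \<inter> V) x * ennreal (wdeg mu x) \<partial>count_space UNIV)"

text \<open>walk_prob mu m x A = P_x(X_m in A) for the simple random walk with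
  transition probabilities mu_xy / mu_x.\<close>
fun walk_prob :: "('a \<Rightarrow> 'a \<Rightarrow> real) \<Rightarrow> nat \<Rightarrow> 'a \<Rightarrow> 'a set \<Rightarrow> real" where
  "walk_prob mu 0 x A = indicator A x"
| "walk_prob mu (Suc m) x A =
     (\<Sum>z\<in>{z. 0 < mu x z}. mu x z / wdeg mu x * walk_prob mu m z A)"

definition pG :: "('a \<Rightarrow> 'a \<Rightarrow> real) \<Rightarrow> nat \<Rightarrow> 'a \<Rightarrow> 'a \<Rightarrow> real" where
  "pG mu m x y = walk_prob mu m x {y} / wdeg mu y"

definition qG :: "('a \<Rightarrow> 'a \<Rightarrow> real) \<Rightarrow> nat \<Rightarrow> 'a \<Rightarrow> 'a \<Rightarrow> real" where
  "qG mu m x y = (pG mu m x y + pG mu (Suc m) x y) / 2"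

section \<open>Radon measure on F, regarded as a Borel measure on E\<close>

definition radon_on :: "'a::metric_space set \<Rightarrow> 'a measure \<Rightarrow> bool" where
  "radon_on F nu \<longleftrightarrow> sets nu = sets borel \<and> emeasure nu (UNIV - F) = 0 \<and>
     (\<forall>x\<in>F. \<exists>r>0. emeasure nu (ball x r) < \<infinity>) \<and>
     (\<forall>A\<in>sets borel. emeasure nu A =
         (SUP K\<in>{K. compact K \<and> K \<subseteq> A \<inter> F}. emeasure nu K))"

definition assmA1 ::
  "'a::metric_space set \<Rightarrow> 'a measure \<Rightarrow> (real \<Rightarrow> 'a \<Rightarrow> real) \<Rightarrow> 'a \<Rightarrow>
   (nat \<Rightarrow> 'a set) \<Rightarrow> (nat \<Rightarrow> 'a \<Rightarrow> 'a \<Rightarrow> real) \<Rightarrow>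
   (nat \<Rightarrow> real) \<Rightarrow> (nat \<Rightarrow> real) \<Rightarrow> (nat \<Rightarrow> real) \<Rightarrow> bool" where
  "assmA1 F nu q rho V mu \<alpha> \<beta> \<gamma> \<longleftrightarrow>
   (\<exists>c1>0. \<forall>n. \<forall>x\<in>V n. \<forall>y\<in>V n. gdist (mu n) x y \<ge> c1 * \<alpha> n * dist x y) \<and>
   (\<exists>\<alpha>t. (\<forall>n. 0 \<le> \<alpha>t n) \<and> \<alpha>t \<in> o(\<alpha>) \<and>
      (\<forall>r>0. \<exists>c2 n0. \<forall>n\<ge>n0. \<forall>x\<in>V n \<inter> ball rho r. \<forall>y\<in>V n \<inter> ball rho r.
          gdist (mu n) x y \<le> c2 * \<alpha> n * dist x y + \<alpha>t n)) \<and>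
   (\<forall>r>0. \<forall>\<epsilon>>0. eventually (\<lambda>n. \<forall>x\<in>ball rho r \<inter> F. infdist x (V n) \<le> \<epsilon>) sequentially) \<and>
   (\<forall>x\<in>F. \<forall>r>0. (\<lambda>n. gmeasure (mu n) (V n) (ball x r) / ennreal (\<beta> n))
        \<longlonglongrightarrow> emeasure nu (ball x r)) \<and>
   (\<forall>a b. 0 < a \<longrightarrow> a \<le> b \<longrightarrow> (\<forall>x\<in>F. \<forall>r>0. \<forall>\<epsilon>>0. eventually (\<lambda>n.
        \<forall>t\<in>{a..b}. \<bar>walk_prob (mu n) (nat \<lfloor>\<gamma> n * t\<rfloor>) rho (ball x r)
                      - (LINT y:ball x r \<inter> F|nu. q t y)\<bar> \<le> \<epsilon>) sequentially))"

definition assmA2 ::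
  "'a \<Rightarrow> (nat \<Rightarrow> 'a set) \<Rightarrow> (nat \<Rightarrow> 'a \<Rightarrow> 'a \<Rightarrow> real) \<Rightarrow>
   (nat \<Rightarrow> real) \<Rightarrow> (nat \<Rightarrow> real) \<Rightarrow> (nat \<Rightarrow> real) \<Rightarrow> bool" where
  "assmA2 rho V mu \<alpha> \<beta> \<gamma> \<longleftrightarrow>
   (\<forall>a b r. 0 < a \<longrightarrow> a \<le> b \<longrightarrow> 0 < r \<longrightarrow> (\<forall>\<epsilon>>0. \<exists>\<delta>>0. eventually (\<lambda>n.
      \<forall>x\<in>V n. \<forall>y\<in>V n. gdist (mu n) rho x < \<alpha> n * r \<longrightarrow> gdist (mu n) rho y < \<alpha> n * r \<longrightarrow>
        gdist (mu n) x y \<le> \<alpha> n * \<delta> \<longrightarrow>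
        (\<forall>t\<in>{a..b}. \<beta> n * \<bar>qG (mu n) (nat \<lfloor>\<gamma> n * t\<rfloor>) rho x
                             - qG (mu n) (nat \<lfloor>\<gamma> n * t\<rfloor>) rho y\<bar> \<le> \<epsilon>)) sequentially))"

definition local_limit ::
  "'a::metric_space set \<Rightarrow> (real \<Rightarrow> 'a \<Rightarrow> real) \<Rightarrow> 'a \<Rightarrow> (nat \<Rightarrow> 'a \<Rightarrow> 'a \<Rightarrow> real) \<Rightarrow>
   (nat \<Rightarrow> real) \<Rightarrow> (nat \<Rightarrow> real) \<Rightarrow> (nat \<Rightarrow> 'a \<Rightarrow> 'a) \<Rightarrow> bool" where
  "local_limit F q rho mu \<beta> \<gamma> g \<longleftrightarrow>
   (\<forall>a b r. 0 < a \<longrightarrow> a \<le> b \<longrightarrow> 0 < r \<longrightarrow> (\<forall>\<epsilon>>0. eventually (\<lambda>n.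
      \<forall>x\<in>ball rho r \<inter> F. \<forall>t\<in>{a..b}.
         \<bar>\<beta> n * qG (mu n) (nat \<lfloor>\<gamma> n * t\<rfloor>) rho (g n x) - q t x\<bar> \<le> \<epsilon>) sequentially))"

end

theory Submission
  imports Defs
begin


lemma wg_edge: assumes "wgraph V mu" "0 < mu x y" shows "x \<in> V" "y \<in> V"
  using assms unfolding wgraph_def by blast+

lemma wg_fin: assumes "wgraph V mu" "x \<in> V" shows "finite {y. 0 < mu x y}"
  using assms unfolding wgraph_def by blast

lemma wdeg_nonneg: "0 \<le> wdeg mu x"
  unfolding wdeg_def by (rule sum_nonneg) simp

lemma wdeg_pos: assumes g: "wgraph V mu" and x: "x \<in> V" shows "0 < wdeg mu x"
proof -
  from g x obtain w where w: "w \<in> V" "w \<noteq> x" unfolding wgraph_def by metis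
  from g x w obtain k where k: "(adj mu ^^ k) x w" unfolding wgraph_def by blast
  then obtain k' where k': "k = Suc k'" using w by (cases k) auto
  from k[unfolded k'] obtain z where z: "adj mu x z" by (metis relpowp_Suc_E2)
  hence mz: "0 < mu x z" by (simp add: adj_def)
  have "mu x z \<le> wdeg mu x" unfolding wdeg_def
    by (rule member_le_sum) (use mz wg_fin[OF g x] in auto)
  with mz show ?thesis by simp
qed

lemma reach_fin: assumes g: "wgraph V mu" and x: "x \<in> V"
  shows "finite {y. \<exists>k\<le>N. (adj mu ^^ k) x y} \<and> {y. \<exists>k\<le>N. (adj mu ^^ k) x y} \<subseteq> V"
proof (induction N)
  case 0 then show ?case using x by auto
next
  case (Suc N)
  let ?S = "{y. \<exists>k\<le>N. (adj mu ^^ k) x y}"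
  have sub: "{y. \<exists>k\<le>Suc N. (adj mu ^^ k) x y} \<subseteq> ?S \<union> (\<Union>z\<in>?S. {y. 0 < mu z y})"
  proof
    fix y assume "y \<in> {y. \<exists>k\<le>Suc N. (adj mu ^^ k) x y}"
    then obtain k where k: "k \<le> Suc N" "(adj mu ^^ k) x y" by auto
    show "y \<in> ?S \<union> (\<Union>z\<in>?S. {y. 0 < mu z y})"
    proof (cases "k \<le> N")
      case True with k show ?thesis by auto
    next
      case False
      hence "k = Suc N" using k by simp
      with k obtain z where "(adj mu ^^ N) x z" "adj mu z y" by (metis relpowp_Suc_E)
      thus ?thesis by (auto simp: adj_def)
    qed
  qed
  have fin: "finite (?S \<union> (\<Union>z\<in>?S. {y. 0 < mu z y}))"
    using Suc.IH wg_fin[OF g] by auto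
  have "?S \<union> (\<Union>z\<in>?S. {y. 0 < mu z y}) \<subseteq> V" using Suc.IH wg_edge[OF g] by blast
  with sub fin show ?case by (meson finite_subset subset_trans)
qed

lemma gdist_ball_fin: assumes g: "wgraph V mu" and x: "x \<in> V"
  shows "finite {y\<in>V. gdist mu x y \<le> c}"
proof -
  have "{y\<in>V. gdist mu x y \<le> c} \<subseteq> {y. \<exists>k\<le>nat \<lceil>c\<rceil>. (adj mu ^^ k) x y}"
  proof
    fix y assume y: "y \<in> {y\<in>V. gdist mu x y \<le> c}"
    from g x y obtain k where "(adj mu ^^ k) x y" unfolding wgraph_def by blast
    hence L: "(adj mu ^^ (LEAST k. (adj mu ^^ k) x y)) x y" by (rule LeastI)
    have "real (LEAST k. (adj mu ^^ k) x y) \<le> c" using y by (simp add: gdist_def)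
    hence "(LEAST k. (adj mu ^^ k) x y) \<le> nat \<lceil>c\<rceil>" by linarith
    with L show "y \<in> {y. \<exists>k\<le>nat \<lceil>c\<rceil>. (adj mu ^^ k) x y}" by blast
  qed
  thus ?thesis using reach_fin[OF g x] finite_subset by blast
qed

lemma walk_sum: assumes g: "wgraph V mu" and fin: "finite (A \<inter> V)"
  shows "x \<in> V \<Longrightarrow> walk_prob mu m x A = (\<Sum>y\<in>A \<inter> V. walk_prob mu m x {y})"
proof (induction m arbitrary: x)
  case 0
  have "(\<Sum>y\<in>A \<inter> V. walk_prob mu 0 x {y}) = (\<Sum>y\<in>A \<inter> V. if y = x then 1 else 0)"
    by (rule sum.cong) (auto simp: indicator_def)
  also have "\<dots> = indicator A x" using fin 0 by (simp add: sum.delta indicator_def)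
  finally show ?case by simp
next
  case (Suc m)
  let ?N = "{z. 0 < mu x z}"
  have "walk_prob mu (Suc m) x A = (\<Sum>z\<in>?N. mu x z / wdeg mu x * (\<Sum>y\<in>A \<inter> V. walk_prob mu m z {y}))"
    by (simp, rule sum.cong) (use Suc.IH wg_edge[OF g] in auto)
  also have "\<dots> = (\<Sum>y\<in>A \<inter> V. \<Sum>z\<in>?N. mu x z / wdeg mu x * walk_prob mu m z {y})"
    by (simp only: sum_distrib_left) (rule sum.swap)
  also have "\<dots> = (\<Sum>y\<in>A \<inter> V. walk_prob mu (Suc m) x {y})" by (simp only: walk_prob.simps)
  finally show ?case .
qed

lemma q_sum: assumes g: "wgraph V mu" and fin: "finite (A \<inter> V)" and x: "x \<in> V"
  shows "(\<Sum>y\<in>A \<inter> V. qG mu m x y * wdeg mu y) = (walk_prob mu m x A + walk_prob mu (Suc m) x A) / 2"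
proof -
  have "(\<Sum>y\<in>A \<inter> V. qG mu m x y * wdeg mu y) =
      (\<Sum>y\<in>A \<inter> V. (walk_prob mu m x {y} + walk_prob mu (Suc m) x {y}) / 2)"
  proof (rule sum.cong)
    fix y assume "y \<in> A \<inter> V"
    hence "wdeg mu y \<noteq> 0" using wdeg_pos[OF g] by force
    thus "qG mu m x y * wdeg mu y = (walk_prob mu m x {y} + walk_prob mu (Suc m) x {y}) / 2"
      by (simp add: qG_def pG_def field_simps)
  qed simp
  also have "\<dots> = (walk_prob mu m x A + walk_prob mu (Suc m) x A) / 2"
    by (simp only: sum_divide_distrib[symmetric] sum.distrib walk_sum[OF g fin x, symmetric])
  finally show ?thesis .
qed

lemma gmeasure_fin: assumes fin: "finite (A \<inter> V)"
  shows "gmeasure mu V A = ennreal (\<Sum>y\<in>A \<inter> V. wdeg mu y)"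
proof -
  have "gmeasure mu V A = (\<integral>\<^sup>+ x. ennreal (wdeg mu x) * indicator (A \<inter> V) x \<partial>count_space UNIV)"
    unfolding gmeasure_def by (simp add: mult.commute)
  also have "\<dots> = (\<Sum>y\<in>A \<inter> V. ennreal (wdeg mu y))"
    using nn_integral_indicator_finite[OF fin, of "count_space UNIV" "\<lambda>x. ennreal (wdeg mu x)"] by simp
  also have "\<dots> = ennreal (\<Sum>y\<in>A \<inter> V. wdeg mu y)" by (simp add: sum_ennreal wdeg_nonneg)
  finally show ?thesis .
qed



lemma unif_q:
  fixes F :: "'a::metric_space set" and q :: "real \<Rightarrow> 'a \<Rightarrow> real"
  assumes qc: "continuous_on ({0<..} \<times> F) (\<lambda>(t, x). q t x)" and a: "0 < a"
    and K: "compact K" "K \<subseteq> F" and e: "0 < e"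
  shows "\<exists>\<eta>>0. \<forall>s\<in>{a..b}. \<forall>s'\<in>{a..b}. \<forall>y\<in>K. \<forall>y'\<in>K.
           \<bar>s - s'\<bar> < \<eta> \<longrightarrow> dist y y' < \<eta> \<longrightarrow> \<bar>q s y - q s' y'\<bar> < e"
proof -
  have "continuous_on ({a..b} \<times> K) (\<lambda>(t, x). q t x)"
    by (rule continuous_on_subset[OF qc]) (use a K in auto)
  hence "uniformly_continuous_on ({a..b} \<times> K) (\<lambda>(t, x). q t x)"
    by (intro compact_uniformly_continuous compact_Times compact_Icc K)
  then obtain d where d: "d > 0" and
    H: "\<And>u u'. u \<in> {a..b} \<times> K \<Longrightarrow> u' \<in> {a..b} \<times> K \<Longrightarrow> dist u' u < d \<Longrightarrow>
         dist ((\<lambda>(t, x). q t x) u') ((\<lambda>(t, x). q t x) u) < e"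
    unfolding uniformly_continuous_on_def using e by metis
  show ?thesis
  proof (intro exI[of _ "d/2"] conjI ballI impI)
    show "0 < d/2" using d by simp
    fix s s' y y' assume st: "s \<in> {a..b}" "s' \<in> {a..b}" "y \<in> K" "y' \<in> K"
      "\<bar>s - s'\<bar> < d/2" "dist y y' < d/2"
    have "dist (s, y) (s', y') \<le> dist s s' + dist y y'"
      unfolding dist_Pair_Pair by (rule sqrt_sum_squares_le_sum) auto
    also have "\<dots> < d" using st by (simp add: dist_real_def)
    finally have "dist (s, y) (s', y') < d" .
    from H[of "(s',y')" "(s,y)"] this st show "\<bar>q s y - q s' y'\<bar> < e"
      by (simp add: dist_real_def dist_commute)
  qed
qed

lemma bound_q:
  fixes F :: "'a::metric_space set" and q :: "real \<Rightarrow> 'a \<Rightarrow> real"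
  assumes qc: "continuous_on ({0<..} \<times> F) (\<lambda>(t, x). q t x)" and a: "0 < a"
    and K: "compact K" "K \<subseteq> F"
  shows "\<exists>M\<ge>0. \<forall>s\<in>{a..b}. \<forall>y\<in>K. \<bar>q s y\<bar> \<le> M"
proof -
  have "continuous_on ({a..b} \<times> K) (\<lambda>(t, x). q t x)"
    by (rule continuous_on_subset[OF qc]) (use a K in auto)
  hence "compact ((\<lambda>(t, x). q t x) ` ({a..b} \<times> K))"
    by (intro compact_continuous_image compact_Times compact_Icc K)
  then obtain M where M: "\<And>u. u \<in> (\<lambda>(t, x). q t x) ` ({a..b} \<times> K) \<Longrightarrow> norm u \<le> M"
    using compact_imp_bounded bounded_iff by metis
  show ?thesis
    by (rule exI[of _ "max M 0"]) (use M in force)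
qed

lemma F_borel:
  fixes F :: "'a::metric_space set"
  assumes F_compact: "\<And>x r. 0 < r \<Longrightarrow> compact (F \<inter> cball x r)" and rho: "rho \<in> F"
  shows "F \<in> sets borel"
proof -
  have "F = (\<Union>k::nat. F \<inter> cball rho (real k + 1))"
  proof (intro equalityI subsetI)
    fix x assume "x \<in> F"
    obtain k::nat where "dist rho x \<le> real k" using real_arch_simple by blast
    hence "x \<in> F \<inter> cball rho (real k + 1)" using \<open>x \<in> F\<close> by simp
    thus "x \<in> (\<Union>k::nat. F \<inter> cball rho (real k + 1))" by blast
  qed auto
  also have "\<dots> \<in> sets borel"
  proof (rule sets.countable_UN, rule image_subsetI)
    fix k :: nat show "F \<inter> cball rho (real k + 1) \<in> sets borel"
      by (intro borel_closed compact_imp_closed F_compact) simp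
  qed
  finally show ?thesis .
qed

lemma nu_ball_F:
  fixes F :: "'a::metric_space set"
  assumes R: "radon_on F nu" and Fb: "F \<in> sets borel" and A: "A \<in> sets borel"
  shows "emeasure nu (A \<inter> F) = emeasure nu A"
proof -
  have sn: "sets nu = sets borel" using R by (simp add: radon_on_def)
  have "UNIV - F \<in> null_sets nu" using R Fb sn by (auto simp: radon_on_def null_sets_def)
  from emeasure_Diff_null_set[OF this] A sn have "emeasure nu (A - (UNIV - F)) = emeasure nu A" by simp
  moreover have "A - (UNIV - F) = A \<inter> F" by blast
  ultimately show ?thesis by simp
qed

lemma nu_ball_finite:
  fixes F :: "'a::metric_space set"
  assumes R: "radon_on F nu" and Fb: "F \<in> sets borel"
    and F_compact: "\<And>x r. 0 < r \<Longrightarrow> compact (F \<inter> cball x r)" and d: "0 < d"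
  shows "emeasure nu (ball z d) < \<infinity>"
proof -
  have sn: "sets nu = sets borel" using R by (simp add: radon_on_def)
  have loc: "\<forall>x\<in>F. \<exists>r>0. emeasure nu (ball x r) < \<infinity>" using R unfolding radon_on_def by blast
  then obtain rr where rr: "\<And>x. x \<in> F \<Longrightarrow> rr x > 0 \<and> emeasure nu (ball x (rr x)) < \<infinity>" by metis
  let ?C = "F \<inter> cball z d"
  have "compact ?C" using F_compact d by blast
  moreover have "?C \<subseteq> (\<Union>x\<in>?C. ball x (rr x))" using rr by force
  ultimately obtain C' where C': "C' \<subseteq> ?C" "finite C'" "?C \<subseteq> (\<Union>x\<in>C'. ball x (rr x))"
    using compactE_image[of ?C ?C "\<lambda>x. ball x (rr x)"] by blast
  have "emeasure nu (ball z d) = emeasure nu (ball z d \<inter> F)"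
    using nu_ball_F[OF R Fb, of "ball z d"] by simp
  also have "\<dots> \<le> emeasure nu (\<Union>x\<in>C'. ball x (rr x))"
    by (rule emeasure_mono) (use C' in \<open>auto simp: sn\<close>)
  also have "\<dots> \<le> (\<Sum>x\<in>C'. emeasure nu (ball x (rr x)))"
    by (rule emeasure_subadditive_finite) (use C' in \<open>auto simp: sn\<close>)
  also have "\<dots> < \<infinity>" using C' rr by (auto simp: sum_Pinfty less_top)
  finally show ?thesis .
qed

lemma int_diff_bound:
  fixes f g :: "'a \<Rightarrow> real"
  assumes f: "set_integrable M A f" and g: "set_integrable M A g"
    and A: "A \<in> sets M" "emeasure M A \<noteq> \<infinity>"
    and b: "\<And>x. x \<in> A \<Longrightarrow> \<bar>f x - g x\<bar> \<le> e"
  shows "\<bar>(LINT x:A|M. f x) - (LINT x:A|M. g x)\<bar> \<le> e * measure M A"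
proof -
  have c: "set_integrable M A (\<lambda>_. e)" using A by (simp add: set_integrable_def less_top)
  have ce: "(LINT x:A|M. e) = e * measure M A" using set_integral_const[OF A, of e] by simp
  have 1: "(LINT x:A|M. f x - g x) \<le> (LINT x:A|M. e)"
    by (rule set_integral_mono) (use f g c b in \<open>auto simp: abs_le_iff\<close>)
  have 2: "(LINT x:A|M. g x - f x) \<le> (LINT x:A|M. e)"
    by (rule set_integral_mono) (use f g c b in \<open>auto simp: abs_le_iff\<close>)
  show ?thesis using 1 2 ce set_integral_diff(2)[OF f g] set_integral_diff(2)[OF g f] by linarith
qed

lemma compact_net:
  fixes K :: "'a::metric_space set"
  assumes "compact K" "0 < d"
  obtains Z where "finite Z" "Z \<subseteq> K" "\<And>x. x \<in> K \<Longrightarrow> \<exists>z\<in>Z. dist x z < d"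
proof -
  have "K \<subseteq> (\<Union>x\<in>K. ball x d)" using assms by auto
  then obtain Z where "Z \<subseteq> K" "finite Z" "K \<subseteq> (\<Union>x\<in>Z. ball x d)"
    using compactE_image[OF assms(1), of K "\<lambda>x. ball x d"] by blast
  thus ?thesis using that by (force simp: dist_commute)
qed

lemma g_infdist:
  assumes "g \<in> V" "\<forall>y\<in>V. dist x g \<le> dist x y"
  shows "dist x g \<le> infdist x V"
  using assms unfolding infdist_def by (auto intro!: cINF_greatest)



lemma g_self:
  assumes "\<And>n x. g n x \<in> V n \<and> (\<forall>y\<in>V n. dist x (g n x) \<le> dist x y)" "x \<in> V n"
  shows "g n x = x"
  using assms by (metis dist_eq_0_iff dist_le_zero_iff)

lemma converse_dir:
  fixes F :: "'a::metric_space set" and rho :: 'a and q :: "real \<Rightarrow> 'a \<Rightarrow> real"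
    and V :: "nat \<Rightarrow> 'a set" and mu :: "nat \<Rightarrow> 'a \<Rightarrow> 'a \<Rightarrow> real"
    and \<alpha> \<beta> \<gamma> :: "nat \<Rightarrow> real" and g :: "nat \<Rightarrow> 'a \<Rightarrow> 'a"
  assumes F_compact: "\<And>x r. 0 < r \<Longrightarrow> compact (F \<inter> cball x r)"
    and q_cont: "continuous_on ({0<..} \<times> F) (\<lambda>(t, x). q t x)"
    and rho_V: "\<And>n. rho \<in> V n"
    and \<alpha>_lim: "filterlim \<alpha> at_top sequentially"
    and \<beta>_nonneg: "\<And>n. 0 \<le> \<beta> n"
    and g_min: "\<And>n x. g n x \<in> V n \<and> (\<forall>y\<in>V n. dist x (g n x) \<le> dist x y)"
    and VF: "\<forall>n. V n \<subseteq> F"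
    and A1a: "\<exists>c1>0. \<forall>n. \<forall>x\<in>V n. \<forall>y\<in>V n. gdist (mu n) x y \<ge> c1 * \<alpha> n * dist x y"
    and LL: "local_limit F q rho mu \<beta> \<gamma> g"
  shows "assmA2 rho V mu \<alpha> \<beta> \<gamma>"
  unfolding assmA2_def
proof (intro allI impI)
  fix a b r \<epsilon> :: real assume a: "0 < a" and ab: "a \<le> b" and r: "0 < r" and e: "0 < \<epsilon>"
  obtain c1 where c1: "c1 > 0" and lb: "\<And>n x y. x \<in> V n \<Longrightarrow> y \<in> V n \<Longrightarrow> gdist (mu n) x y \<ge> c1 * \<alpha> n * dist x y"
    using A1a by blast
  define R where "R = r / c1"
  have R: "0 < R" using r c1 by (simp add: R_def)
  let ?K = "F \<inter> cball rho R"
  obtain \<eta> where \<eta>: "\<eta> > 0" and U: "\<And>s s' y y'. s\<in>{a..b} \<Longrightarrow> s'\<in>{a..b} \<Longrightarrow> y\<in>?K \<Longrightarrow> y'\<in>?K \<Longrightarrow>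
      \<bar>s - s'\<bar> < \<eta> \<Longrightarrow> dist y y' < \<eta> \<Longrightarrow> \<bar>q s y - q s' y'\<bar> < \<epsilon>/3"
    using unif_q[OF q_cont a, of ?K "\<epsilon>/3" b] F_compact[OF R] e by auto
  have E: "eventually (\<lambda>n. \<forall>x\<in>ball rho R \<inter> F. \<forall>t\<in>{a..b}.
         \<bar>\<beta> n * qG (mu n) (nat \<lfloor>\<gamma> n * t\<rfloor>) rho (g n x) - q t x\<bar> \<le> \<epsilon>/3) sequentially"
  proof -
    have "\<forall>\<epsilon>>0. eventually (\<lambda>n. \<forall>x\<in>ball rho R \<inter> F. \<forall>t\<in>{a..b}.
         \<bar>\<beta> n * qG (mu n) (nat \<lfloor>\<gamma> n * t\<rfloor>) rho (g n x) - q t x\<bar> \<le> \<epsilon>) sequentially"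
      using LL a ab R unfolding local_limit_def by blast
    thus ?thesis using e by (meson divide_pos_pos zero_less_numeral)
  qed
  have A: "eventually (\<lambda>n. 1 \<le> \<alpha> n) sequentially"
    using \<alpha>_lim unfolding filterlim_at_top by blast
  define \<delta> where "\<delta> = c1 * \<eta> / 2"
  show "\<exists>\<delta>>0. eventually (\<lambda>n.
      \<forall>x\<in>V n. \<forall>y\<in>V n. gdist (mu n) rho x < \<alpha> n * r \<longrightarrow> gdist (mu n) rho y < \<alpha> n * r \<longrightarrow>
        gdist (mu n) x y \<le> \<alpha> n * \<delta> \<longrightarrow>
        (\<forall>t\<in>{a..b}. \<beta> n * \<bar>qG (mu n) (nat \<lfloor>\<gamma> n * t\<rfloor>) rho x
                             - qG (mu n) (nat \<lfloor>\<gamma> n * t\<rfloor>) rho y\<bar> \<le> \<epsilon>)) sequentially"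
  proof (intro exI[of _ \<delta>] conjI)
    show "0 < \<delta>" using c1 \<eta> by (simp add: \<delta>_def)
    show "eventually (\<lambda>n.
      \<forall>x\<in>V n. \<forall>y\<in>V n. gdist (mu n) rho x < \<alpha> n * r \<longrightarrow> gdist (mu n) rho y < \<alpha> n * r \<longrightarrow>
        gdist (mu n) x y \<le> \<alpha> n * \<delta> \<longrightarrow>
        (\<forall>t\<in>{a..b}. \<beta> n * \<bar>qG (mu n) (nat \<lfloor>\<gamma> n * t\<rfloor>) rho x
                             - qG (mu n) (nat \<lfloor>\<gamma> n * t\<rfloor>) rho y\<bar> \<le> \<epsilon>)) sequentially"
    proof (rule eventually_mono[OF eventually_conj[OF E A]], intro ballI impI)
      fix n x y t
      assume En: "(\<forall>x\<in>ball rho R \<inter> F. \<forall>t\<in>{a..b}.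
         \<bar>\<beta> n * qG (mu n) (nat \<lfloor>\<gamma> n * t\<rfloor>) rho (g n x) - q t x\<bar> \<le> \<epsilon>/3) \<and> 1 \<le> \<alpha> n"
        and x: "x \<in> V n" and y: "y \<in> V n" and hx: "gdist (mu n) rho x < \<alpha> n * r"
        and hy: "gdist (mu n) rho y < \<alpha> n * r" and hxy: "gdist (mu n) x y \<le> \<alpha> n * \<delta>"
        and t: "t \<in> {a..b}"
      have al: "0 < \<alpha> n" using En by linarith
      have inb: "z \<in> ball rho R \<inter> F" if z: "z \<in> V n" "gdist (mu n) rho z < \<alpha> n * r" for z
      proof -
        have "c1 * \<alpha> n * dist rho z < \<alpha> n * r" using lb[OF rho_V z(1)] z(2) by linarith
        hence "\<alpha> n * (c1 * dist rho z) < \<alpha> n * r" by (simp add: algebra_simps)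
        hence "c1 * dist rho z < r" using al by simp
        hence "dist rho z < R" using c1 by (simp add: R_def pos_less_divide_eq mult.commute)
        thus ?thesis using z VF by auto
      qed
      have xb: "x \<in> ball rho R \<inter> F" and yb: "y \<in> ball rho R \<inter> F" using inb x y hx hy by auto
      have "c1 * \<alpha> n * dist x y \<le> \<alpha> n * \<delta>" using lb[OF x y] hxy by linarith
      hence "\<alpha> n * (c1 * dist x y) \<le> \<alpha> n * (c1 * (\<eta> / 2))" by (simp add: algebra_simps \<delta>_def)
      hence "c1 * dist x y \<le> c1 * (\<eta> / 2)" using al by simp
      hence "dist x y \<le> \<eta> / 2" using c1 by simp
      hence "\<bar>q t x - q t y\<bar> < \<epsilon>/3" using U[of t t x y] t xb yb \<eta> by auto
      moreover have "\<bar>\<beta> n * qG (mu n) (nat \<lfloor>\<gamma> n * t\<rfloor>) rho x - q t x\<bar> \<le> \<epsilon>/3"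
        using En xb t g_self[of g V, OF g_min x] by force
      moreover have "\<bar>\<beta> n * qG (mu n) (nat \<lfloor>\<gamma> n * t\<rfloor>) rho y - q t y\<bar> \<le> \<epsilon>/3"
        using En yb t g_self[of g V, OF g_min y] by force
      ultimately have "\<bar>\<beta> n * qG (mu n) (nat \<lfloor>\<gamma> n * t\<rfloor>) rho x - \<beta> n * qG (mu n) (nat \<lfloor>\<gamma> n * t\<rfloor>) rho y\<bar> \<le> \<epsilon>"
        by linarith
      thus "\<beta> n * \<bar>qG (mu n) (nat \<lfloor>\<gamma> n * t\<rfloor>) rho x - qG (mu n) (nat \<lfloor>\<gamma> n * t\<rfloor>) rho y\<bar> \<le> \<epsilon>"
        using \<beta>_nonneg[of n] by (metis abs_mult abs_of_nonneg right_diff_distrib)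
    qed
  qed
qed



lemma floor_shift:
  fixes c t :: real assumes "0 < c" "0 \<le> t"
  shows "nat \<lfloor>c * (t + 1 / c)\<rfloor> = Suc (nat \<lfloor>c * t\<rfloor>)"
proof -
  have "c * (t + 1 / c) = c * t + 1" using assms by (simp add: field_simps)
  moreover have "0 \<le> \<lfloor>c * t\<rfloor>" using assms by simp
  ultimately show ?thesis by (simp add: nat_add_distrib)
qed

lemma sum_bound:
  fixes f w :: "'b \<Rightarrow> real"
  assumes A: "finite A" and \<beta>: "0 < \<beta>" and w: "\<And>y. y \<in> A \<Longrightarrow> 0 \<le> w y"
    and b: "\<And>y. y \<in> A \<Longrightarrow> \<bar>Q - \<beta> * f y\<bar> \<le> c"
  shows "\<bar>Q * ((\<Sum>y\<in>A. w y) / \<beta>) - (\<Sum>y\<in>A. f y * w y)\<bar> \<le> c * ((\<Sum>y\<in>A. w y) / \<beta>)"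
proof -
  have eq: "Q * ((\<Sum>y\<in>A. w y) / \<beta>) - (\<Sum>y\<in>A. f y * w y) = (\<Sum>y\<in>A. (Q - \<beta> * f y) * w y) / \<beta>"
    using \<beta> by (simp add: sum_distrib_left sum_subtractf field_simps sum_divide_distrib)
  have "\<bar>\<Sum>y\<in>A. (Q - \<beta> * f y) * w y\<bar> \<le> (\<Sum>y\<in>A. \<bar>(Q - \<beta> * f y) * w y\<bar>)" by (rule sum_abs)
  also have "\<dots> \<le> (\<Sum>y\<in>A. c * w y)"
    by (rule sum_mono) (use w b in \<open>auto simp: abs_mult intro: mult_right_mono\<close>)
  finally have "\<bar>\<Sum>y\<in>A. (Q - \<beta> * f y) * w y\<bar> \<le> c * (\<Sum>y\<in>A. w y)" by (simp add: sum_distrib_left)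
  hence "\<bar>\<Sum>y\<in>A. (Q - \<beta> * f y) * w y\<bar> / \<beta> \<le> c * (\<Sum>y\<in>A. w y) / \<beta>"
    using \<beta> by (simp add: divide_right_mono)
  thus ?thesis unfolding eq using \<beta> by simp
qed

lemma arith_fin:
  fixes Q W P v qx \<epsilon> :: real
  assumes v: "0 < v" and e: "0 < \<epsilon>" and W: "v / 2 \<le> W"
    and h1: "\<bar>Q * W - P\<bar> \<le> \<epsilon> / 4 * W"
    and h2: "\<bar>P - qx * v\<bar> \<le> \<epsilon> / 4 * v"
    and h3: "\<bar>qx\<bar> * \<bar>W - v\<bar> \<le> \<epsilon> / 16 * v"
  shows "\<bar>Q - qx\<bar> \<le> \<epsilon>"
proof -
  have Wp: "0 < W" using v W by simp
  have "\<bar>qx * v - qx * W\<bar> = \<bar>qx\<bar> * \<bar>W - v\<bar>" by (simp add: abs_mult[symmetric] algebra_simps abs_minus_commute)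
  hence "\<bar>Q * W - qx * W\<bar> \<le> \<epsilon> / 4 * W + \<epsilon> / 4 * v + \<epsilon> / 16 * v" using h1 h2 h3 by linarith
  also have "\<dots> \<le> \<epsilon> * W"
  proof -
    have "\<epsilon> * (5 * v) \<le> \<epsilon> * (12 * W)" using W Wp e by (intro mult_left_mono) linarith+
    thus ?thesis by (simp add: field_simps)
  qed
  finally have 1: "\<bar>Q * W - qx * W\<bar> \<le> \<epsilon> * W" .
  have "\<bar>Q * W - qx * W\<bar> = \<bar>Q - qx\<bar> * W"
    by (simp only: left_diff_distrib[symmetric] abs_mult abs_of_pos[OF Wp])
  with 1 have "\<bar>Q - qx\<bar> * W \<le> \<epsilon> * W" by simp
  thus ?thesis using Wp by simp
qed



lemma abs4:
  fixes p p' i i' c e :: real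
  assumes "\<bar>p - i\<bar> \<le> e" "\<bar>p' - i'\<bar> \<le> e" "\<bar>i' - i\<bar> \<le> 2 * e" "\<bar>i - c\<bar> \<le> 2 * e"
  shows "\<bar>(p + p') / 2 - c\<bar> \<le> 4 * e"
proof -
  have "(p + p') / 2 - c \<le> 4 * e" using assms unfolding abs_le_iff by (simp add: field_simps)
  moreover have "c - (p + p') / 2 \<le> 4 * e" using assms unfolding abs_le_iff by (simp add: field_simps)
  ultimately show ?thesis by (simp add: abs_le_iff)
qed

lemma forward_dir:
  fixes F :: "'a::metric_space set" and rho :: 'a and nu :: "'a measure"
    and q :: "real \<Rightarrow> 'a \<Rightarrow> real"
    and V :: "nat \<Rightarrow> 'a set" and mu :: "nat \<Rightarrow> 'a \<Rightarrow> 'a \<Rightarrow> real"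
    and \<alpha> \<beta> \<gamma> :: "nat \<Rightarrow> real" and g :: "nat \<Rightarrow> 'a \<Rightarrow> 'a"
  assumes F_compact: "\<And>x r. 0 < r \<Longrightarrow> compact (F \<inter> cball x r)"
    and rho_F: "rho \<in> F"
    and nu_radon: "radon_on F nu"
    and nu_full: "\<And>x r. x \<in> F \<Longrightarrow> 0 < r \<Longrightarrow> 0 < emeasure nu (ball x r)"
    and q_cont: "continuous_on ({0<..} \<times> F) (\<lambda>(t, x). q t x)"
    and q_int: "\<And>t. 0 < t \<Longrightarrow> set_integrable nu F (q t)"
    and graphs: "\<And>n. wgraph (V n) (mu n)"
    and rho_V: "\<And>n. rho \<in> V n"
    and \<alpha>_nonneg: "\<And>n. 0 \<le> \<alpha> n" and \<alpha>_lim: "filterlim \<alpha> at_top sequentially"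
    and \<beta>_nonneg: "\<And>n. 0 \<le> \<beta> n" and \<beta>_lim: "filterlim \<beta> at_top sequentially"
    and \<gamma>_lim: "filterlim \<gamma> at_top sequentially"
    and g_min: "\<And>n x. g n x \<in> V n \<and> (\<forall>y\<in>V n. dist x (g n x) \<le> dist x y)"
    and A1: "assmA1 F nu q rho V mu \<alpha> \<beta> \<gamma>" and A2: "assmA2 rho V mu \<alpha> \<beta> \<gamma>"
  shows "local_limit F q rho mu \<beta> \<gamma> g"
  unfolding local_limit_def
proof (intro allI impI)
  fix a b r \<epsilon> :: real assume a: "0 < a" and ab: "a \<le> b" and r: "0 < r" and e: "0 < \<epsilon>"
  have Fb: "F \<in> sets borel" by (rule F_borel[OF F_compact rho_F])
  have sn: "sets nu = sets borel" using nu_radon by (simp add: radon_on_def)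
  note A1' = A1[unfolded assmA1_def]
  note A1b = A1'[THEN conjunct2, THEN conjunct2, THEN conjunct1]
  note A1c = A1'[THEN conjunct2, THEN conjunct2, THEN conjunct2, THEN conjunct1]
  note A1d = A1'[THEN conjunct2, THEN conjunct2, THEN conjunct2, THEN conjunct2]
  obtain atl where AT_o: "atl \<in> o(\<alpha>)" and UB: "\<forall>r>0. \<exists>c2 n0. \<forall>n\<ge>n0. \<forall>x\<in>V n \<inter> ball rho r. \<forall>y\<in>V n \<inter> ball rho r.
          gdist (mu n) x y \<le> c2 * \<alpha> n * dist x y + atl n"
    using A1'[THEN conjunct2, THEN conjunct1] by (elim exE conjE) (rule that)
  have "\<exists>c2 n0. \<forall>n\<ge>n0. \<forall>x\<in>V n \<inter> ball rho (r+2). \<forall>y\<in>V n \<inter> ball rho (r+2).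
          gdist (mu n) x y \<le> c2 * \<alpha> n * dist x y + atl n"
    by (rule UB[rule_format]) (use r in linarith)
  then obtain c2 n0 where UB2: "\<And>n x y. n \<ge> n0 \<Longrightarrow> x \<in> V n \<inter> ball rho (r+2) \<Longrightarrow> y \<in> V n \<inter> ball rho (r+2) \<Longrightarrow>
      gdist (mu n) x y \<le> c2 * \<alpha> n * dist x y + atl n" by blast
  define C where "C = \<bar>c2\<bar>"
  have C0: "0 \<le> C" by (simp add: C_def)
  have UB3: "gdist (mu n) x y \<le> C * \<alpha> n * d + atl n"
    if "n \<ge> n0" "x \<in> V n \<inter> ball rho (r+2)" "y \<in> V n \<inter> ball rho (r+2)" "dist x y \<le> d" for n x y d
  proof -
    have "c2 * \<alpha> n * dist x y \<le> C * \<alpha> n * dist x y"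
      using \<alpha>_nonneg[of n] by (intro mult_right_mono) (auto simp: C_def)
    also have "\<dots> \<le> C * \<alpha> n * d" using that C0 \<alpha>_nonneg[of n] by (intro mult_left_mono) auto
    finally show ?thesis using UB2[OF that(1-3)] by linarith
  qed
  define R where "R = C * (r + 2) + 1"
  have R: "0 < R" using mult_nonneg_nonneg[OF C0, of "r+2"] r unfolding R_def by linarith
  let ?K = "F \<inter> cball rho (r + 1)"
  have Kc: "compact ?K" using F_compact r by simp
  obtain M where M0: "0 \<le> M" and M: "\<And>s y. s \<in> {a..b+1} \<Longrightarrow> y \<in> ?K \<Longrightarrow> \<bar>q s y\<bar> \<le> M"
    using bound_q[OF q_cont a Kc, of "b+1"] by blast
  obtain \<eta> where \<eta>: "\<eta> > 0" and U: "\<And>s s' y y'. s\<in>{a..b+1} \<Longrightarrow> s'\<in>{a..b+1} \<Longrightarrow> y\<in>?K \<Longrightarrow> y'\<in>?K \<Longrightarrow>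
      \<bar>s - s'\<bar> < \<eta> \<Longrightarrow> dist y y' < \<eta> \<Longrightarrow> \<bar>q s y - q s' y'\<bar> < \<epsilon>/8"
    using unif_q[OF q_cont a Kc _ , of "\<epsilon>/8" "b+1"] e by auto
  obtain \<delta>2 where \<delta>2: "\<delta>2 > 0" and E2: "eventually (\<lambda>n.
      \<forall>x\<in>V n. \<forall>y\<in>V n. gdist (mu n) rho x < \<alpha> n * R \<longrightarrow> gdist (mu n) rho y < \<alpha> n * R \<longrightarrow>
        gdist (mu n) x y \<le> \<alpha> n * \<delta>2 \<longrightarrow>
        (\<forall>t\<in>{a..b}. \<beta> n * \<bar>qG (mu n) (nat \<lfloor>\<gamma> n * t\<rfloor>) rho x
                             - qG (mu n) (nat \<lfloor>\<gamma> n * t\<rfloor>) rho y\<bar> \<le> \<epsilon>/4)) sequentially"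
  proof -
    have "0 < \<epsilon>/4" using e by simp
    from A2[unfolded assmA2_def, rule_format, OF a ab R this] show ?thesis using that by blast
  qed
  define \<delta> where "\<delta> = min (1/2) (min (\<eta>/3) (\<delta>2/(6*C+1)))"
  have \<delta>0: "0 < \<delta>" using \<eta> \<delta>2 C0 by (simp add: \<delta>_def)
  have \<delta>1: "\<delta> \<le> 1/2" unfolding \<delta>_def by (rule min.cobounded1)
  have \<delta>3: "\<delta> \<le> \<eta>/3" unfolding \<delta>_def by (meson min.cobounded1 min.cobounded2 order_trans)
  have \<delta>4: "\<delta> * (6*C+1) \<le> \<delta>2"
  proof -
    have "\<delta> \<le> \<delta>2/(6*C+1)" unfolding \<delta>_def by (meson min.cobounded2 order_trans)
    thus ?thesis using C0 by (simp add: pos_le_divide_eq)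
  qed
  have C3: "C * (3 * \<delta>) \<le> \<delta>2 / 2" using \<delta>4 \<delta>0 by (simp add: algebra_simps)
  have Kr: "compact (F \<inter> cball rho r)" using F_compact r by simp
  obtain Z where Zf: "finite Z" and ZK: "Z \<subseteq> F \<inter> cball rho r"
    and Zn: "\<And>x. x \<in> F \<inter> cball rho r \<Longrightarrow> \<exists>z\<in>Z. dist x z < \<delta>"
    using compact_net[OF Kr \<delta>0] by metis
  define v where "v z = measure nu (ball z \<delta>)" for z
  have vfin: "emeasure nu (ball z \<delta>) = ennreal (v z)" for z
    unfolding v_def using nu_ball_finite[OF nu_radon Fb F_compact \<delta>0, of z]
    by (intro emeasure_eq_ennreal_measure) simp
  have vpos: "0 < v z" if "z \<in> Z" for z
  proof -
    have "0 < emeasure nu (ball z \<delta>)" using nu_full[of z \<delta>] that ZK \<delta>0 by auto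
    thus ?thesis unfolding vfin by simp
  qed
  have BFsets: "ball z \<delta> \<inter> F \<in> sets nu" for z using Fb sn by auto
  have BFe: "emeasure nu (ball z \<delta> \<inter> F) = ennreal (v z)" for z
    using nu_ball_F[OF nu_radon Fb, of "ball z \<delta>"] vfin by simp
  have BFm: "measure nu (ball z \<delta> \<inter> F) = v z" for z
    using BFe[of z] unfolding measure_def by (simp add: v_def measure_nonneg)
  define ec where "ec = min (1/2) (\<epsilon> / (16 * (M + 1)))"
  have ec0: "0 < ec" using e M0 by (simp add: ec_def)
  have ec1: "ec \<le> 1/2" unfolding ec_def by (rule min.cobounded1)
  have ecM: "M * ec \<le> \<epsilon> / 16"
  proof -
    have "M * ec \<le> M * (\<epsilon> / (16 * (M + 1)))" using M0 unfolding ec_def by (intro mult_left_mono min.cobounded2)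
    also have "\<dots> = (\<epsilon> / 16) * (M / (M + 1))" using M0 by (simp add: field_simps)
    also have "\<dots> \<le> (\<epsilon> / 16) * 1" using M0 e by (intro mult_left_mono) simp_all
    finally show ?thesis by simp
  qed
  define W where "W n z = (\<Sum>y\<in>ball z \<delta> \<inter> V n. wdeg (mu n) y) / \<beta> n" for n z
  define I where "I s z = (LINT y:ball z \<delta> \<inter> F|nu. q s y)" for s z
  have finball: "finite (V n \<inter> ball rho (r+2))" if n: "n \<ge> n0" for n
  proof -
    have "V n \<inter> ball rho (r+2) \<subseteq> {y\<in>V n. gdist (mu n) rho y \<le> C * \<alpha> n * (r+2) + atl n}"
    proof
      fix y assume y: "y \<in> V n \<inter> ball rho (r+2)"
      have "rho \<in> V n \<inter> ball rho (r+2)" using rho_V r by simp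
      from UB3[OF n this y, of "r+2"] y show "y \<in> {y\<in>V n. gdist (mu n) rho y \<le> C * \<alpha> n * (r+2) + atl n}"
        by auto
    qed
    thus ?thesis using gdist_ball_fin[OF graphs rho_V] finite_subset by blast
  qed
  have fin: "finite (ball z \<delta> \<inter> V n)" if "n \<ge> n0" "dist rho z \<le> r" for n z
  proof -
    have "ball z \<delta> \<inter> V n \<subseteq> V n \<inter> ball rho (r+2)"
    proof
      fix y assume "y \<in> ball z \<delta> \<inter> V n"
      moreover have "dist rho y \<le> dist rho z + dist z y" by (rule dist_triangle)
      ultimately show "y \<in> V n \<inter> ball rho (r+2)" using that \<delta>1 by auto
    qed
    thus ?thesis using finball[OF that(1)] finite_subset by blast
  qed
  have ev_n0: "eventually (\<lambda>n. n \<ge> n0) sequentially" by (rule eventually_ge_at_top)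
  have ev_al: "eventually (\<lambda>n. 1 \<le> \<alpha> n) sequentially" using \<alpha>_lim unfolding filterlim_at_top by blast
  have ev_be: "eventually (\<lambda>n. 1 \<le> \<beta> n) sequentially" using \<beta>_lim unfolding filterlim_at_top by blast
  have ev_ga: "eventually (\<lambda>n. max 1 (2/\<eta>) \<le> \<gamma> n) sequentially" using \<gamma>_lim unfolding filterlim_at_top by blast
  have ev_at: "eventually (\<lambda>n. norm (atl n) \<le> min (1/2) (\<delta>2/2) * norm (\<alpha> n)) sequentially"
    by (rule landau_o.smallD[OF AT_o]) (use \<delta>2 in simp)
  have ev_b: "eventually (\<lambda>n. \<forall>x\<in>ball rho r \<inter> F. infdist x (V n) \<le> \<delta>) sequentially"
    using A1b[rule_format, OF r \<delta>0] .
  have ev_c: "eventually (\<lambda>n. \<forall>z\<in>Z. \<bar>W n z - v z\<bar> < ec * v z) sequentially"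
  proof (rule eventually_ball_finite[OF Zf], rule ballI)
    fix z assume z: "z \<in> Z"
    have zF: "z \<in> F" and zr: "dist rho z \<le> r" using z ZK by auto
    have lim: "(\<lambda>n. gmeasure (mu n) (V n) (ball z \<delta>) / ennreal (\<beta> n)) \<longlonglongrightarrow> ennreal (v z)"
      using A1c[rule_format, OF zF \<delta>0] unfolding vfin .
    have "eventually (\<lambda>n. gmeasure (mu n) (V n) (ball z \<delta>) / ennreal (\<beta> n) = ennreal (W n z)) sequentially"
    proof (rule eventually_mono[OF eventually_conj[OF ev_n0 ev_be]])
      fix n assume n: "n0 \<le> n \<and> 1 \<le> \<beta> n"
      have "gmeasure (mu n) (V n) (ball z \<delta>) = ennreal (\<Sum>y\<in>ball z \<delta> \<inter> V n. wdeg (mu n) y)"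
        by (rule gmeasure_fin) (use fin n zr in auto)
      thus "gmeasure (mu n) (V n) (ball z \<delta>) / ennreal (\<beta> n) = ennreal (W n z)"
        using n by (simp add: W_def divide_ennreal sum_nonneg wdeg_nonneg)
    qed
    with lim have "(\<lambda>n. ennreal (W n z)) \<longlonglongrightarrow> ennreal (v z)" by (rule Lim_transform_eventually)
    hence "(\<lambda>n. W n z) \<longlonglongrightarrow> v z"
      by (subst (asm) tendsto_ennreal_iff)
         (auto simp: W_def v_def sum_nonneg wdeg_nonneg \<beta>_nonneg measure_nonneg)
    from tendstoD[OF this, of "ec * v z"] show "eventually (\<lambda>n. \<bar>W n z - v z\<bar> < ec * v z) sequentially"
      using ec0 vpos[OF z] by (simp add: dist_real_def)
  qed
  have ev_d: "eventually (\<lambda>n. \<forall>z\<in>Z. \<forall>s\<in>{a..b+1}. \<bar>walk_prob (mu n) (nat \<lfloor>\<gamma> n * s\<rfloor>) rho (ball z \<delta>)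
                      - I s z\<bar> \<le> \<epsilon>/16 * v z) sequentially"
  proof (rule eventually_ball_finite[OF Zf], rule ballI)
    fix z assume z: "z \<in> Z"
    have zF: "z \<in> F" using z ZK by auto
    have "0 < \<epsilon>/16 * v z" using e vpos[OF z] by simp
    thus "eventually (\<lambda>n. \<forall>s\<in>{a..b+1}. \<bar>walk_prob (mu n) (nat \<lfloor>\<gamma> n * s\<rfloor>) rho (ball z \<delta>)
                      - I s z\<bar> \<le> \<epsilon>/16 * v z) sequentially"
      using A1d[rule_format, of a "b+1" z \<delta> "\<epsilon>/16 * v z"] a ab zF \<delta>0 unfolding I_def by linarith
  qed
  have ev_all: "eventually (\<lambda>n. n \<ge> n0 \<and> 1 \<le> \<alpha> n \<and> 1 \<le> \<beta> n \<and> max 1 (2/\<eta>) \<le> \<gamma> n \<and>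
      norm (atl n) \<le> min (1/2) (\<delta>2/2) * norm (\<alpha> n) \<and>
      (\<forall>x\<in>ball rho r \<inter> F. infdist x (V n) \<le> \<delta>) \<and>
      (\<forall>z\<in>Z. \<bar>W n z - v z\<bar> < ec * v z) \<and>
      (\<forall>z\<in>Z. \<forall>s\<in>{a..b+1}. \<bar>walk_prob (mu n) (nat \<lfloor>\<gamma> n * s\<rfloor>) rho (ball z \<delta>) - I s z\<bar> \<le> \<epsilon>/16 * v z) \<and>
      (\<forall>x\<in>V n. \<forall>y\<in>V n. gdist (mu n) rho x < \<alpha> n * R \<longrightarrow> gdist (mu n) rho y < \<alpha> n * R \<longrightarrow>
        gdist (mu n) x y \<le> \<alpha> n * \<delta>2 \<longrightarrow>
        (\<forall>t\<in>{a..b}. \<beta> n * \<bar>qG (mu n) (nat \<lfloor>\<gamma> n * t\<rfloor>) rho x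
                             - qG (mu n) (nat \<lfloor>\<gamma> n * t\<rfloor>) rho y\<bar> \<le> \<epsilon>/4))) sequentially"
    by (intro eventually_conj ev_n0 ev_al ev_be ev_ga ev_at ev_b ev_c ev_d E2)
  show "eventually (\<lambda>n. \<forall>x\<in>ball rho r \<inter> F. \<forall>t\<in>{a..b}.
         \<bar>\<beta> n * qG (mu n) (nat \<lfloor>\<gamma> n * t\<rfloor>) rho (g n x) - q t x\<bar> \<le> \<epsilon>) sequentially"
  proof (rule eventually_mono[OF ev_all], intro ballI)
    fix n x t
    assume H: "n \<ge> n0 \<and> 1 \<le> \<alpha> n \<and> 1 \<le> \<beta> n \<and> max 1 (2/\<eta>) \<le> \<gamma> n \<and>
      norm (atl n) \<le> min (1/2) (\<delta>2/2) * norm (\<alpha> n) \<and>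
      (\<forall>x\<in>ball rho r \<inter> F. infdist x (V n) \<le> \<delta>) \<and>
      (\<forall>z\<in>Z. \<bar>W n z - v z\<bar> < ec * v z) \<and>
      (\<forall>z\<in>Z. \<forall>s\<in>{a..b+1}. \<bar>walk_prob (mu n) (nat \<lfloor>\<gamma> n * s\<rfloor>) rho (ball z \<delta>) - I s z\<bar> \<le> \<epsilon>/16 * v z) \<and>
      (\<forall>x\<in>V n. \<forall>y\<in>V n. gdist (mu n) rho x < \<alpha> n * R \<longrightarrow> gdist (mu n) rho y < \<alpha> n * R \<longrightarrow>
        gdist (mu n) x y \<le> \<alpha> n * \<delta>2 \<longrightarrow>
        (\<forall>t\<in>{a..b}. \<beta> n * \<bar>qG (mu n) (nat \<lfloor>\<gamma> n * t\<rfloor>) rho x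
                             - qG (mu n) (nat \<lfloor>\<gamma> n * t\<rfloor>) rho y\<bar> \<le> \<epsilon>/4))"
      and x: "x \<in> ball rho r \<inter> F" and t: "t \<in> {a..b}"
    note n0 = H[THEN conjunct1]
    note al = H[THEN conjunct2, THEN conjunct1]
    note be = H[THEN conjunct2, THEN conjunct2, THEN conjunct1]
    note ga = H[THEN conjunct2, THEN conjunct2, THEN conjunct2, THEN conjunct1]
    note atn = H[THEN conjunct2, THEN conjunct2, THEN conjunct2, THEN conjunct2, THEN conjunct1]
    note Hb = H[THEN conjunct2, THEN conjunct2, THEN conjunct2, THEN conjunct2, THEN conjunct2, THEN conjunct1]
    note Hc = H[THEN conjunct2, THEN conjunct2, THEN conjunct2, THEN conjunct2, THEN conjunct2, THEN conjunct2, THEN conjunct1]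
    note Hd = H[THEN conjunct2, THEN conjunct2, THEN conjunct2, THEN conjunct2, THEN conjunct2, THEN conjunct2, THEN conjunct2, THEN conjunct1]
    note H2 = H[THEN conjunct2, THEN conjunct2, THEN conjunct2, THEN conjunct2, THEN conjunct2, THEN conjunct2, THEN conjunct2, THEN conjunct2]
    have at1: "atl n \<le> \<alpha> n / 2" and at2: "atl n \<le> \<alpha> n * (\<delta>2 / 2)"
    proof -
      have "atl n \<le> min (1/2) (\<delta>2/2) * \<alpha> n" using atn al by simp
      moreover have "min (1/2) (\<delta>2/2) * \<alpha> n \<le> 1/2 * \<alpha> n"
        by (rule mult_right_mono[OF min.cobounded1]) (use al in linarith)
      moreover have "min (1/2) (\<delta>2/2) * \<alpha> n \<le> \<delta>2/2 * \<alpha> n"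
        by (rule mult_right_mono[OF min.cobounded2]) (use al in linarith)
      ultimately show "atl n \<le> \<alpha> n / 2" "atl n \<le> \<alpha> n * (\<delta>2 / 2)" by (simp_all add: mult.commute)
    qed
    have xK: "x \<in> F \<inter> cball rho r" using x by auto
    obtain z where z: "z \<in> Z" and xz: "dist x z < \<delta>" using Zn[OF xK] by blast
    have zF: "z \<in> F" and zr: "dist rho z \<le> r" using z ZK by auto
    define B where "B = ball z \<delta>"
    define A where "A = B \<inter> V n"
    have finA: "finite A" unfolding A_def B_def using fin[OF n0 zr] .
    define m where "m = nat \<lfloor>\<gamma> n * t\<rfloor>"
    have gpos: "0 < \<gamma> n" using ga by linarith
    have t0: "0 \<le> t" using t a by simp
    define t' where "t' = t + 1 / \<gamma> n"
    have m': "nat \<lfloor>\<gamma> n * t'\<rfloor> = Suc m" unfolding t'_def m_def by (rule floor_shift[OF gpos t0])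
    have ig1: "1 / \<gamma> n \<le> 1" using ga gpos by simp
    have ig2: "1 / \<gamma> n < \<eta>"
    proof -
      have "2 / \<eta> \<le> \<gamma> n" using ga by simp
      hence "2 \<le> \<gamma> n * \<eta>" using \<eta> by (simp add: divide_le_eq)
      hence "1 < \<gamma> n * \<eta>" by linarith
      thus ?thesis using gpos by (simp add: divide_less_eq mult.commute)
    qed
    have ig0: "0 < 1 / \<gamma> n" using gpos by simp
    have tI: "t \<in> {a..b+1}" using t by simp
    have ta: "a \<le> t" "t \<le> b" using t by auto
    have t'I: "t' \<in> {a..b+1}" unfolding t'_def atLeastAtMost_iff using ta ig0 ig1 by (intro conjI) linarith+
    have tt': "\<bar>t' - t\<bar> < \<eta>" using ig2 ig0 unfolding t'_def by simp
    define gx where "gx = g n x"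
    have gxV: "gx \<in> V n" using g_min unfolding gx_def by blast
    have dgx: "dist x gx \<le> \<delta>"
    proof -
      have "dist x gx \<le> infdist x (V n)"
        using g_infdist[OF gxV, of x] g_min[of n x] unfolding gx_def by blast
      thus ?thesis using Hb[rule_format, OF x] by linarith
    qed
    define Q where "Q = \<beta> n * qG (mu n) m rho gx"
    have inR: "gdist (mu n) rho y < \<alpha> n * R" if "y \<in> V n \<inter> ball rho (r+2)" for y
    proof -
      have "rho \<in> V n \<inter> ball rho (r+2)" using rho_V r by simp
      from UB3[OF n0 this that, of "r+2"] that have "gdist (mu n) rho y \<le> C * \<alpha> n * (r+2) + atl n" by simp
      also have "\<dots> < \<alpha> n * R" using at1 al unfolding R_def by (simp add: algebra_simps)
      finally show ?thesis .
    qed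
    have gxb: "gx \<in> V n \<inter> ball rho (r+2)"
    proof -
      have "dist rho gx \<le> dist rho x + dist x gx" by (rule dist_triangle)
      thus ?thesis using gxV x dgx \<delta>1 by auto
    qed
    have pair: "\<bar>Q - \<beta> n * qG (mu n) m rho y\<bar> \<le> \<epsilon>/4" if y: "y \<in> A" for y
    proof -
      have yV: "y \<in> V n" and zy: "dist z y < \<delta>" using y unfolding A_def B_def by auto
      have yb: "y \<in> V n \<inter> ball rho (r+2)"
      proof -
        have "dist rho y \<le> dist rho z + dist z y" by (rule dist_triangle)
        thus ?thesis using yV zr zy \<delta>1 by auto
      qed
      have dxy: "dist gx y \<le> 3 * \<delta>"
      proof -
        have "dist gx y \<le> dist gx x + dist x y" by (rule dist_triangle)
        moreover have "dist x y \<le> dist x z + dist z y" by (rule dist_triangle)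
        ultimately show ?thesis using dgx xz zy by (simp add: dist_commute)
      qed
      have "gdist (mu n) gx y \<le> C * \<alpha> n * (3 * \<delta>) + atl n" by (rule UB3[OF n0 gxb yb dxy])
      also have "\<dots> \<le> \<alpha> n * \<delta>2"
      proof -
        have "C * \<alpha> n * (3 * \<delta>) = \<alpha> n * (C * (3 * \<delta>))" by simp
        also have "\<dots> \<le> \<alpha> n * (\<delta>2 / 2)" using C3 al by (intro mult_left_mono) auto
        finally show ?thesis using at2 by (simp add: field_simps)
      qed
      finally have gd: "gdist (mu n) gx y \<le> \<alpha> n * \<delta>2" .
      have "\<beta> n * \<bar>qG (mu n) m rho gx - qG (mu n) m rho y\<bar> \<le> \<epsilon>/4"
        using H2[rule_format, OF gxV yV inR[OF gxb] inR[OF yb] gd t] unfolding m_def .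
      thus ?thesis unfolding Q_def using be
        by (metis abs_mult abs_of_nonneg right_diff_distrib \<beta>_nonneg)
    qed
    have h1: "\<bar>Q * W n z - (\<Sum>y\<in>A. qG (mu n) m rho y * wdeg (mu n) y)\<bar> \<le> \<epsilon>/4 * W n z"
      unfolding W_def A_def[symmetric] B_def[symmetric]
      by (rule sum_bound[OF finA _ wdeg_nonneg pair]) (use be in simp)
    have Peq: "(\<Sum>y\<in>A. qG (mu n) m rho y * wdeg (mu n) y) =
        (walk_prob (mu n) m rho B + walk_prob (mu n) (Suc m) rho B) / 2"
      unfolding A_def by (rule q_sum[OF graphs _ rho_V]) (use finA in \<open>simp add: A_def\<close>)
    have d1: "\<bar>walk_prob (mu n) m rho B - I t z\<bar> \<le> \<epsilon>/16 * v z"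
      using Hd[rule_format, OF z tI] unfolding m_def B_def .
    have d2: "\<bar>walk_prob (mu n) (Suc m) rho B - I t' z\<bar> \<le> \<epsilon>/16 * v z"
      using Hd[rule_format, OF z t'I] unfolding m' B_def .
    have qi: "set_integrable nu (B \<inter> F) (q s)" if "0 < s" for s
      by (rule set_integrable_subset[OF q_int[OF that]]) (use BFsets in \<open>auto simp: B_def\<close>)
    have BFfin: "emeasure nu (B \<inter> F) \<noteq> \<infinity>" unfolding B_def BFe by simp
    have BFs: "B \<inter> F \<in> sets nu" unfolding B_def by (rule BFsets)
    have yK: "y \<in> ?K" and yx: "dist y x < \<eta>" if "y \<in> B \<inter> F" for y
    proof -
      have zy: "dist z y < \<delta>" using that unfolding B_def by auto
      have "dist rho y \<le> dist rho z + dist z y" by (rule dist_triangle)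
      thus "y \<in> ?K" using that zr zy \<delta>1 by auto
      have "dist y x \<le> dist y z + dist z x" by (rule dist_triangle)
      thus "dist y x < \<eta>" using zy xz \<delta>3 \<eta> by (simp add: dist_commute)
    qed
    have xKK: "x \<in> ?K" using x by auto
    have t'pos: "0 < t'" and tpos: "0 < t" using t'I tI a by auto
    have d3: "\<bar>I t' z - I t z\<bar> \<le> \<epsilon>/8 * v z"
    proof -
      have "\<bar>I t' z - I t z\<bar> \<le> \<epsilon>/8 * measure nu (B \<inter> F)"
        unfolding I_def B_def[symmetric]
        by (rule int_diff_bound[OF qi[OF t'pos] qi[OF tpos] BFs BFfin])
           (use U[OF t'I tI yK yK] tt' \<eta> in \<open>force\<close>)
      thus ?thesis unfolding B_def BFm .
    qed
    have pt4: "\<bar>q t y - q t x\<bar> \<le> \<epsilon>/8" if yB: "y \<in> B \<inter> F" for y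
    proof -
      have "\<bar>q t y - q t x\<bar> < \<epsilon>/8" by (rule U[OF tI tI yK[OF yB] xKK]) (use \<eta> yx[OF yB] in auto)
      thus ?thesis by simp
    qed
    have d4: "\<bar>I t z - q t x * v z\<bar> \<le> \<epsilon>/8 * v z"
    proof -
      have ci: "set_integrable nu (B \<inter> F) (\<lambda>_. q t x)"
        using BFs BFfin by (simp add: set_integrable_def less_top)
      have "\<bar>I t z - (LINT y:B \<inter> F|nu. q t x)\<bar> \<le> \<epsilon>/8 * measure nu (B \<inter> F)"
        unfolding I_def B_def[symmetric]
        by (rule int_diff_bound[OF qi[OF tpos] ci BFs BFfin])
           (rule pt4)
      moreover have "(LINT y:B \<inter> F|nu. q t x) = q t x * v z"
        using set_integral_const[OF BFs BFfin, of "q t x"] BFm unfolding B_def by simp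
      ultimately show ?thesis unfolding B_def BFm by simp
    qed
    have vz: "0 < v z" by (rule vpos[OF z])
    have h2: "\<bar>(\<Sum>y\<in>A. qG (mu n) m rho y * wdeg (mu n) y) - q t x * v z\<bar> \<le> \<epsilon>/4 * v z"
    proof -
      have "\<bar>I t' z - I t z\<bar> \<le> 2 * (\<epsilon>/16 * v z)" using d3 by simp
      moreover have "\<bar>I t z - q t x * v z\<bar> \<le> 2 * (\<epsilon>/16 * v z)" using d4 by simp
      ultimately have "\<bar>(walk_prob (mu n) m rho B + walk_prob (mu n) (Suc m) rho B) / 2 - q t x * v z\<bar> \<le> 4 * (\<epsilon>/16 * v z)"
        by (rule abs4[OF d1 d2])
      thus ?thesis unfolding Peq by simp
    qed
    have Wv: "\<bar>W n z - v z\<bar> \<le> ec * v z" using Hc[rule_format, OF z] by linarith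
    have W2: "v z / 2 \<le> W n z"
    proof -
      have "ec * v z \<le> 1/2 * v z" by (rule mult_right_mono[OF ec1]) (use vz in simp)
      moreover have "- (W n z - v z) \<le> \<bar>W n z - v z\<bar>" by (rule abs_ge_minus_self)
      ultimately show ?thesis using Wv by linarith
    qed
    have h3: "\<bar>q t x\<bar> * \<bar>W n z - v z\<bar> \<le> \<epsilon>/16 * v z"
    proof -
      have "\<bar>q t x\<bar> \<le> M" using M[OF tI xKK] .
      hence "\<bar>q t x\<bar> * \<bar>W n z - v z\<bar> \<le> M * (ec * v z)" using Wv M0 by (intro mult_mono) auto
      also have "\<dots> = (M * ec) * v z" by simp
      also have "\<dots> \<le> \<epsilon>/16 * v z" using ecM vz by (intro mult_right_mono) auto
      finally show ?thesis .
    qed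
    have "\<bar>Q - q t x\<bar> \<le> \<epsilon>" by (rule arith_fin[OF vz e W2 h1 h2 h3])
    thus "\<bar>\<beta> n * qG (mu n) (nat \<lfloor>\<gamma> n * t\<rfloor>) rho (g n x) - q t x\<bar> \<le> \<epsilon>"
      unfolding Q_def m_def gx_def .
  qed
qed


theorem theorem1p1:
  fixes F :: "'a::metric_space set" and rho :: 'a and nu :: "'a measure"
    and q :: "real \<Rightarrow> 'a \<Rightarrow> real"
    and V :: "nat \<Rightarrow> 'a set" and mu :: "nat \<Rightarrow> 'a \<Rightarrow> 'a \<Rightarrow> real"
    and \<alpha> \<beta> \<gamma> :: "nat \<Rightarrow> real" and g :: "nat \<Rightarrow> 'a \<Rightarrow> 'a"
  assumes F_compact: "\<And>x r. 0 < r \<Longrightarrow> compact (F \<inter> cball x r)"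
    and rho_F: "rho \<in> F"
    and nu_radon: "radon_on F nu"
    and nu_full: "\<And>x r. x \<in> F \<Longrightarrow> 0 < r \<Longrightarrow> 0 < emeasure nu (ball x r)"
    and q_cont: "continuous_on ({0<..} \<times> F) (\<lambda>(t, x). q t x)"
    and q_nonneg: "\<And>t x. 0 < t \<Longrightarrow> x \<in> F \<Longrightarrow> 0 \<le> q t x"
    and q_int: "\<And>t. 0 < t \<Longrightarrow> set_integrable nu F (q t)"
    and q_norm: "\<And>t. 0 < t \<Longrightarrow> (LINT y:F|nu. q t y) = 1"
    and graphs: "\<And>n. wgraph (V n) (mu n)"
    and rho_V: "\<And>n. rho \<in> V n"
    and \<alpha>_nonneg: "\<And>n. 0 \<le> \<alpha> n" and \<alpha>_lim: "filterlim \<alpha> at_top sequentially"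
    and \<beta>_nonneg: "\<And>n. 0 \<le> \<beta> n" and \<beta>_lim: "filterlim \<beta> at_top sequentially"
    and \<gamma>_nonneg: "\<And>n. 0 \<le> \<gamma> n" and \<gamma>_lim: "filterlim \<gamma> at_top sequentially"
    and g_min: "\<And>n x. g n x \<in> V n \<and> (\<forall>y\<in>V n. dist x (g n x) \<le> dist x y)"
  shows "(assmA1 F nu q rho V mu \<alpha> \<beta> \<gamma> \<and> assmA2 rho V mu \<alpha> \<beta> \<gamma>
            \<longrightarrow> local_limit F q rho mu \<beta> \<gamma> g)
       \<and> ((\<forall>n. V n \<subseteq> F) \<and> assmA1 F nu q rho V mu \<alpha> \<beta> \<gamma> \<and> local_limit F q rho mu \<beta> \<gamma> g
            \<longrightarrow> assmA2 rho V mu \<alpha> \<beta> \<gamma>)"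
proof (intro conjI impI)
  assume "assmA1 F nu q rho V mu \<alpha> \<beta> \<gamma> \<and> assmA2 rho V mu \<alpha> \<beta> \<gamma>"
  thus "local_limit F q rho mu \<beta> \<gamma> g"
    using forward_dir[of F rho nu q V mu \<alpha> \<beta> \<gamma> g, OF F_compact rho_F nu_radon nu_full q_cont q_int graphs rho_V \<alpha>_nonneg \<alpha>_lim
        \<beta>_nonneg \<beta>_lim \<gamma>_lim g_min] by blast
next
  assume H: "(\<forall>n. V n \<subseteq> F) \<and> assmA1 F nu q rho V mu \<alpha> \<beta> \<gamma> \<and> local_limit F q rho mu \<beta> \<gamma> g"
  hence A1a: "\<exists>c1>0. \<forall>n. \<forall>x\<in>V n. \<forall>y\<in>V n. gdist (mu n) x y \<ge> c1 * \<alpha> n * dist x y"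
    unfolding assmA1_def by (elim conjE)
  show "assmA2 rho V mu \<alpha> \<beta> \<gamma>"
    by (rule converse_dir[of F q rho V \<alpha> \<beta> g mu \<gamma>, OF F_compact q_cont rho_V \<alpha>_lim \<beta>_nonneg g_min _ A1a]) (use H in blast)+
qed

end
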